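(* Let $G$ be a graph and let $\{e_1,e_2\}$ be a $2$-edge-cut in $G$. Suppose that $\{e_1,f_1,f_2\}$ is a $3$-edge-cut in $G$. Then $\{e_2,f_1,f_2\}$ is a $3$-edge-cut in $G$ as well.
   Context: Graphs may have parallel edges but no loops. A $k$-edge-cut is an inclusion-minimal edge cut of size $k$: a set of $k$ edges whose removal increases the number of connected components of $G$, such that no proper subset has this property. *)

theory Defs
  imports Main
begin

text \<open>A finite multigraph (parallel edges allowed, no loops): vertex set V, edge set E
  (edges are abstract identifiers), and an endpoint map; each edge has exactly two
  distinct endpoints in V.\<close>
definition multigraph :: "'v set \<Rightarrow> 'e set \<Rightarrow> ('e \<Rightarrow> 'v set) \<Rightarrow> bool" where
  "multigraph V E ends \<longleftrightarrow> finite V \<and> finite E \<and>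
     (\<forall>e\<in>E. \<exists>u v. u \<in> V \<and> v \<in> V \<and> u \<noteq> v \<and> ends e = {u, v})"

definition edge_step :: "'e set \<Rightarrow> ('e \<Rightarrow> 'v set) \<Rightarrow> 'v \<Rightarrow> 'v \<Rightarrow> bool" where
  "edge_step F ends u v \<longleftrightarrow> (\<exists>e\<in>F. ends e = {u, v})"

definition components :: "'v set \<Rightarrow> 'e set \<Rightarrow> ('e \<Rightarrow> 'v set) \<Rightarrow> 'v set set" where
  "components V F ends = (\<lambda>u. {w \<in> V. (edge_step F ends)\<^sup>*\<^sup>* u w}) ` V"

definition num_components :: "'v set \<Rightarrow> 'e set \<Rightarrow> ('e \<Rightarrow> 'v set) \<Rightarrow> nat" where
  "num_components V F ends = card (components V F ends)"

definition is_edge_cut :: "'v set \<Rightarrow> 'e set \<Rightarrow> ('e \<Rightarrow> 'v set) \<Rightarrow> 'e set \<Rightarrow> bool" where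
  "is_edge_cut V E ends C \<longleftrightarrow>
     C \<subseteq> E \<and> num_components V (E - C) ends > num_components V E ends"

definition is_k_edge_cut :: "nat \<Rightarrow> 'v set \<Rightarrow> 'e set \<Rightarrow> ('e \<Rightarrow> 'v set) \<Rightarrow> 'e set \<Rightarrow> bool" where
  "is_k_edge_cut k V E ends C \<longleftrightarrow>
     is_edge_cut V E ends C \<and> card C = k \<and> (\<forall>D. D \<subset> C \<longrightarrow> \<not> is_edge_cut V E ends D)"

end

theory Submission
  imports Defs
begin

abbreviation conn :: "'e set \<Rightarrow> ('e \<Rightarrow> 'v set) \<Rightarrow> 'v \<Rightarrow> 'v \<Rightarrow> bool" where
  "conn F ends \<equiv> (edge_step F ends)\<^sup>*\<^sup>*"

lemma step_sym: "edge_step F ends u v \<Longrightarrow> edge_step F ends v u"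
  by (auto simp: edge_step_def insert_commute)

lemma conn_sym: "conn F ends x y \<Longrightarrow> conn F ends y x"
proof (induction rule: rtranclp_induct)
  case base then show ?case by simp
next
  case (step y z)
  then show ?case using step_sym
    by (metis converse_rtranclp_into_rtranclp)
qed

lemma conn_trans: "conn F ends x y \<Longrightarrow> conn F ends y z \<Longrightarrow> conn F ends x z"
  by (rule rtranclp_trans)

lemma conn_edge: "e \<in> F \<Longrightarrow> ends e = {x, y} \<Longrightarrow> conn F ends x y"
  by (rule r_into_rtranclp) (auto simp: edge_step_def)

lemma conn_mono:
  assumes "F \<subseteq> F'" "conn F ends x y" shows "conn F' ends x y"
  using assms(2)
proof (induction rule: rtranclp_induct)
  case base then show ?case by simp
next
  case (step y z)
  then have "edge_step F' ends y z" using assms(1) by (auto simp: edge_step_def)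
  then show ?case using step by (meson rtranclp.rtrancl_into_rtrancl)
qed

lemma conn_insert:
  assumes "conn (insert e F) ends x y" "ends e = {a, b}"
  shows "conn F ends x y \<or> (conn F ends x a \<and> conn F ends b y) \<or> (conn F ends x b \<and> conn F ends a y)"
  using assms(1)
proof (induction rule: rtranclp_induct)
  case base then show ?case by simp
next
  case (step z w)
  from step.hyps(2) obtain e' where e': "e' \<in> insert e F" "ends e' = {z, w}"
    by (auto simp: edge_step_def)
  show ?case
  proof (cases "e' \<in> F")
    case True
    then have "conn F ends z w" using e' conn_edge by metis
    then show ?thesis using step.IH conn_trans by metis
  next
    case False
    then have "e' = e" using e' by auto
    then have "{z, w} = {a, b}" using e' assms(2) by simp
    then have "(z = a \<and> w = b) \<or> (z = b \<and> w = a)" by (auto simp: doubleton_eq_iff)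
    then show ?thesis using step.IH conn_trans conn_sym rtranclp.rtrancl_refl by metis
  qed
qed

lemma conn_insert_same:
  assumes "ends e = {a, b}" "conn F ends a b"
  shows "conn (insert e F) ends x y = conn F ends x y"
proof
  assume "conn (insert e F) ends x y"
  from conn_insert[OF this assms(1)] show "conn F ends x y"
    using assms(2) conn_trans conn_sym by metis
next
  assume "conn F ends x y"
  then show "conn (insert e F) ends x y" by (rule conn_mono[rotated]) auto
qed

lemma conn_ends_swap:
  assumes "ends e = {x, y}" "ends e = {x', y'}" "conn F ends x y"
  shows "conn F ends x' y'"
  using assms conn_sym by (metis doubleton_eq_iff)

lemma comps_less:
  assumes "finite V" "F' \<subseteq> F" "u \<in> V" "v \<in> V" "conn F ends u v" "\<not> conn F' ends u v"
  shows "card (components V F ends) < card (components V F' ends)"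
proof -
  define cls where "cls G u = {w \<in> V. conn G ends u w}" for G u
  define h where "h X = {w \<in> V. \<exists>x\<in>X. conn F ends x w}" for X
  have hc: "h (cls F' x) = cls F x" if "x \<in> V" for x
  proof
    show "h (cls F' x) \<subseteq> cls F x"
    proof
      fix w assume "w \<in> h (cls F' x)"
      then obtain y where y: "w \<in> V" "conn F' ends x y" "conn F ends y w"
        unfolding h_def cls_def by blast
      have "conn F ends x y" using conn_mono[OF assms(2) y(2)] .
      then have "conn F ends x w" using y(3) by (rule conn_trans)
      then show "w \<in> cls F x" unfolding cls_def using y(1) by simp
    qed
    show "cls F x \<subseteq> h (cls F' x)"
    proof
      fix w assume "w \<in> cls F x"
      moreover have "x \<in> cls F' x" unfolding cls_def using that by simp
      ultimately show "w \<in> h (cls F' x)" unfolding h_def cls_def by blast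
    qed
  qed
  have cF: "components V G ends = cls G ` V" for G
    unfolding components_def cls_def by simp
  have img: "components V F ends = h ` components V F' ends"
    unfolding cF using hc by (auto simp: image_image)
  have fin: "finite (components V F' ends)" unfolding cF using assms(1) by simp
  have ni: "\<not> inj_on h (components V F' ends)"
  proof
    assume inj: "inj_on h (components V F' ends)"
    have "cls F u = cls F v"
      unfolding cls_def using assms(5) conn_sym[OF assms(5)] conn_trans[of F ends u v] conn_trans[of F ends v u]
      by auto
    then have "h (cls F' u) = h (cls F' v)" using hc assms(3,4) by simp
    moreover have "cls F' u \<in> components V F' ends" "cls F' v \<in> components V F' ends"
      unfolding cF using assms(3,4) by auto
    ultimately have "cls F' u = cls F' v" using inj by (meson inj_onD)
    moreover have "v \<in> cls F' v" unfolding cls_def using assms(4) by simp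
    moreover have "v \<notin> cls F' u" unfolding cls_def using assms(6) by simp
    ultimately show False by simp
  qed
  have "card (h ` components V F' ends) \<le> card (components V F' ends)"
    using fin by (rule card_image_le)
  moreover have "card (h ` components V F' ends) \<noteq> card (components V F' ends)"
    using ni inj_on_iff_eq_card[OF fin, of h] by blast
  ultimately show ?thesis using img by simp
qed

lemma conn_remove_same:
  assumes "C \<subseteq> E" "\<forall>e\<in>C. \<forall>x y. ends e = {x, y} \<longrightarrow> conn (E - C) ends x y"
  shows "conn E ends x y = conn (E - C) ends x y"
proof
  assume "conn E ends x y"
  then show "conn (E - C) ends x y"
  proof (induction rule: rtranclp_induct)
    case base then show ?case by simp
  next
    case (step z w)
    from step.hyps(2) obtain e where e: "e \<in> E" "ends e = {z, w}"
      by (auto simp: edge_step_def)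
    have "conn (E - C) ends z w"
    proof (cases "e \<in> C")
      case True then show ?thesis using assms(2) e(2) by simp
    next
      case False then show ?thesis using e conn_edge by (metis Diff_iff)
    qed
    then show ?case using step.IH conn_trans by metis
  qed
next
  assume "conn (E - C) ends x y"
  then show "conn E ends x y" by (rule conn_mono[rotated]) auto
qed

lemma cut_iff:
  assumes mg: "multigraph V E ends"
  shows "is_edge_cut V E ends C \<longleftrightarrow>
    C \<subseteq> E \<and> (\<exists>e\<in>C. \<exists>x y. ends e = {x, y} \<and> \<not> conn (E - C) ends x y)"
proof
  assume cut: "is_edge_cut V E ends C"
  then have CE: "C \<subseteq> E" by (simp add: is_edge_cut_def)
  show "C \<subseteq> E \<and> (\<exists>e\<in>C. \<exists>x y. ends e = {x, y} \<and> \<not> conn (E - C) ends x y)"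
  proof (rule ccontr)
    assume "\<not> ?thesis"
    then have "\<forall>e\<in>C. \<forall>x y. ends e = {x, y} \<longrightarrow> conn (E - C) ends x y" using CE by blast
    then have "conn E ends = conn (E - C) ends" by (intro ext) (rule conn_remove_same[OF CE])
    then have "components V E ends = components V (E - C) ends"
      unfolding components_def by simp
    then show False using cut by (simp add: is_edge_cut_def num_components_def)
  qed
next
  assume r: "C \<subseteq> E \<and> (\<exists>e\<in>C. \<exists>x y. ends e = {x, y} \<and> \<not> conn (E - C) ends x y)"
  then obtain e x y where e: "e \<in> C" "ends e = {x, y}" "\<not> conn (E - C) ends x y" by blast
  have eE: "e \<in> E" using r e by blast
  then obtain x' y' where xy: "x' \<in> V" "y' \<in> V" "ends e = {x', y'}"
    using mg unfolding multigraph_def by blast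
  have n: "\<not> conn (E - C) ends x' y'" using conn_ends_swap[where F="E - C" and x=x' and y=y' and x'=x and y'=y and e=e and ends=ends] xy(3) e by blast
  have c: "conn E ends x' y'" using conn_edge[where e=e and F=E and ends=ends and x=x' and y=y'] eE xy(3) by blast
  have fin: "finite V" using mg by (simp add: multigraph_def)
  show "is_edge_cut V E ends C"
    unfolding is_edge_cut_def num_components_def
    using r comps_less[OF fin _ xy(1,2) c n] by blast
qed


lemma cut_mono:
  assumes mg: "multigraph V E ends" and c: "is_edge_cut V E ends D" and DD: "D \<subseteq> D'" and DE: "D' \<subseteq> E"
  shows "is_edge_cut V E ends D'"
proof -
  have "D \<subseteq> E \<and> (\<exists>e\<in>D. \<exists>x y. ends e = {x, y} \<and> \<not> conn (E - D) ends x y)"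
    using c unfolding cut_iff[OF mg] .
  then obtain e x y where e: "e \<in> D" "ends e = {x, y}" "\<not> conn (E - D) ends x y"
    by blast
  have "\<not> conn (E - D') ends x y"
  proof
    assume "conn (E - D') ends x y"
    then have "conn (E - D) ends x y" by (rule conn_mono[rotated]) (use DD in auto)
    then show False using e(3) by simp
  qed
  then have "D' \<subseteq> E \<and> (\<exists>e\<in>D'. \<exists>x y. ends e = {x, y} \<and> \<not> conn (E - D') ends x y)"
    using e(1,2) DD DE by blast
  then show ?thesis unfolding cut_iff[OF mg] .
qed

lemma notcut_conn:
  assumes mg: "multigraph V E ends" and nc: "\<not> is_edge_cut V E ends D" and "D \<subseteq> E" "e \<in> D" "ends e = {x, y}"
  shows "conn (E - D) ends x y"
proof -
  have "\<not> (D \<subseteq> E \<and> (\<exists>e\<in>D. \<exists>x y. ends e = {x, y} \<and> \<not> conn (E - D) ends x y))"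
    using nc unfolding cut_iff[OF mg] .
  then show ?thesis using assms(3-5) by blast
qed

lemma min_sep:
  assumes mg: "multigraph V E ends" and c: "is_edge_cut V E ends C"
    and m: "\<forall>D. D \<subset> C \<longrightarrow> \<not> is_edge_cut V E ends D"
    and e: "e \<in> C" "ends e = {x, y}"
  shows "\<not> conn (E - C) ends x y"
proof
  assume xy: "conn (E - C) ends x y"
  have CE: "C \<subseteq> E" using c by (simp add: is_edge_cut_def)
  have "C - {e} \<subset> C" using e(1) by blast
  then have nc: "\<not> is_edge_cut V E ends (C - {e})" using m by simp
  have eq: "E - (C - {e}) = insert e (E - C)" using CE e(1) by blast
  have all: "conn (E - C) ends x' y'" if "e' \<in> C" "ends e' = {x', y'}" for e' x' y'
  proof (cases "e' = e")
    case True
    then show ?thesis using conn_ends_swap[where F="E - C" and x=x and y=y and x'=x' and y'=y' and e=e and ends=ends] xy e(2) that(2) by blast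
  next
    case False
    have "C - {e} \<subseteq> E" "e' \<in> C - {e}" using CE that(1) False by auto
    from notcut_conn[OF mg nc this that(2)]
    have "conn (E - (C - {e})) ends x' y'" .
    then have "conn (insert e (E - C)) ends x' y'" using eq by simp
    then show ?thesis using conn_insert_same[where e=e and F="E - C" and ends=ends and a=x and b=y] e(2) xy by blast
  qed
  have "\<not> (C \<subseteq> E \<and> (\<exists>e\<in>C. \<exists>x y. ends e = {x, y} \<and> \<not> conn (E - C) ends x y))"
    using all by blast
  then have "\<not> is_edge_cut V E ends C" unfolding cut_iff[OF mg] .
  then show False using c by simp
qed

lemma keyA:
  assumes ea1: "ends e1 = {a1, b1}" and ea2: "ends e2 = {a2, b2}" and ef2: "ends f2 = {c2, d2}"
    and h1: "\<not> conn (insert f2 G0) ends a2 b2"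
    and h2: "\<not> conn (insert f2 G0) ends a1 b1"
    and A1: "conn (insert e2 G0) ends a1 c2" and A2: "conn (insert e2 G0) ends d2 b1"
  shows "conn (insert e1 (insert f2 G0)) ends a2 b2"
proof -
  let ?H = "insert e1 (insert f2 G0)" and ?P = "insert f2 G0"
  have RH: "conn ?H ends x y" if "conn G0 ends x y" for x y
    using that by (rule conn_mono[rotated]) auto
  have RP: "conn ?P ends x y" if "conn G0 ends x y" for x y
    using that by (rule conn_mono[rotated]) auto
  have He1: "conn ?H ends a1 b1" using conn_edge[where e=e1 and F="?H" and ends=ends] ea1 by blast
  have Hf2: "conn ?H ends c2 d2" using conn_edge[where e=f2 and F="?H" and ends=ends] ef2 by blast
  have Pf2: "conn ?P ends c2 d2" using conn_edge[where e=f2 and F="?P" and ends=ends] ef2 by blast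
  have D1: "conn G0 ends a1 c2 \<or> (conn G0 ends a1 a2 \<and> conn G0 ends b2 c2) \<or> (conn G0 ends a1 b2 \<and> conn G0 ends a2 c2)"
    using conn_insert[where e=e2 and F=G0 and ends=ends and a=a2 and b=b2] A1 ea2 by blast
  have D2: "conn G0 ends d2 b1 \<or> (conn G0 ends d2 a2 \<and> conn G0 ends b2 b1) \<or> (conn G0 ends d2 b2 \<and> conn G0 ends a2 b1)"
    using conn_insert[where e=e2 and F=G0 and ends=ends and a=a2 and b=b2] A2 ea2 by blast
  from D1 D2 show ?thesis
  proof (elim disjE conjE)
    assume g1: "conn G0 ends a1 c2" and g2: "conn G0 ends d2 b1"
    have "conn ?P ends a1 b1" by (rule conn_trans[OF conn_trans[OF RP[OF g1] Pf2] RP[OF g2]])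
    then show ?thesis using h2 by simp
  next
    assume g1: "conn G0 ends a1 c2" and g2: "conn G0 ends d2 a2" and g3: "conn G0 ends b2 b1"
    show ?thesis by (rule conn_trans[OF conn_trans[OF conn_trans[OF conn_trans[OF RH[OF conn_sym[OF g2]] conn_sym[OF Hf2]] RH[OF conn_sym[OF g1]]] He1] RH[OF conn_sym[OF g3]]])
  next
    assume g1: "conn G0 ends a1 c2" and g2: "conn G0 ends d2 b2" and g3: "conn G0 ends a2 b1"
    show ?thesis by (rule conn_trans[OF conn_trans[OF conn_trans[OF conn_trans[OF RH[OF g3] conn_sym[OF He1]] RH[OF g1]] Hf2] RH[OF g2]])
  next
    assume g1: "conn G0 ends a1 a2" and g2: "conn G0 ends b2 c2" and g3: "conn G0 ends d2 b1"
    show ?thesis by (rule conn_trans[OF conn_trans[OF conn_trans[OF conn_trans[OF RH[OF conn_sym[OF g1]] He1] RH[OF conn_sym[OF g3]]] conn_sym[OF Hf2]] RH[OF conn_sym[OF g2]]])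
  next
    assume g1: "conn G0 ends a1 a2" and g2: "conn G0 ends b2 c2" and g3: "conn G0 ends d2 a2" and g4: "conn G0 ends b2 b1"
    have "conn ?P ends a2 b2" by (rule conn_trans[OF conn_trans[OF RP[OF conn_sym[OF g3]] conn_sym[OF Pf2]] RP[OF conn_sym[OF g2]]])
    then show ?thesis using h1 by simp
  next
    assume g1: "conn G0 ends a1 a2" and g2: "conn G0 ends b2 c2" and g3: "conn G0 ends d2 b2" and g4: "conn G0 ends a2 b1"
    have "conn ?P ends a1 b1" by (rule RP[OF conn_trans[OF g1 g4]])
    then show ?thesis using h2 by simp
  next
    assume g1: "conn G0 ends a1 b2" and g2: "conn G0 ends a2 c2" and g3: "conn G0 ends d2 b1"
    show ?thesis by (rule conn_trans[OF conn_trans[OF conn_trans[OF conn_trans[OF RH[OF g2] Hf2] RH[OF g3]] conn_sym[OF He1]] RH[OF g1]])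
  next
    assume g1: "conn G0 ends a1 b2" and g2: "conn G0 ends a2 c2" and g3: "conn G0 ends d2 a2" and g4: "conn G0 ends b2 b1"
    have "conn ?P ends a1 b1" by (rule RP[OF conn_trans[OF g1 g4]])
    then show ?thesis using h2 by simp
  next
    assume g1: "conn G0 ends a1 b2" and g2: "conn G0 ends a2 c2" and g3: "conn G0 ends d2 b2" and g4: "conn G0 ends a2 b1"
    have "conn ?P ends a2 b2" by (rule conn_trans[OF conn_trans[OF RP[OF g2] Pf2] RP[OF g3]])
    then show ?thesis using h1 by simp
  qed
qed


lemma key:
  assumes ea1: "ends e1 = {a1, b1}" and ea2: "ends e2 = {a2, b2}" and ef2: "ends f2 = {c2, d2}"
    and h1: "\<not> conn (insert f2 G0) ends a2 b2"
    and h2: "\<not> conn (insert f2 G0) ends a1 b1"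
    and h3: "\<not> conn (insert e2 G0) ends a1 b1"
    and h4: "conn (insert f2 (insert e2 G0)) ends a1 b1"
  shows "conn (insert e1 (insert f2 G0)) ends a2 b2"
proof -
  have "conn (insert e2 G0) ends a1 b1 \<or> (conn (insert e2 G0) ends a1 c2 \<and> conn (insert e2 G0) ends d2 b1)
      \<or> (conn (insert e2 G0) ends a1 d2 \<and> conn (insert e2 G0) ends c2 b1)"
    using conn_insert[where e=f2 and F="insert e2 G0" and ends=ends and a=c2 and b=d2] h4 ef2 by blast
  then show ?thesis
  proof (elim disjE conjE)
    assume "conn (insert e2 G0) ends a1 b1" then show ?thesis using h3 by simp
  next
    assume "conn (insert e2 G0) ends a1 c2" "conn (insert e2 G0) ends d2 b1"
    then show ?thesis using keyA[OF ea1 ea2 ef2 h1 h2] by blast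
  next
    assume "conn (insert e2 G0) ends a1 d2" "conn (insert e2 G0) ends c2 b1"
    moreover have "ends f2 = {d2, c2}" using ef2 by auto
    ultimately show ?thesis using keyA[OF ea1 ea2 _ h1 h2, of d2 c2] by blast
  qed
qed

lemma card3_distinct: "card {a, b, c} = 3 \<Longrightarrow> a \<noteq> b \<and> a \<noteq> c \<and> b \<noteq> c"
  by (auto simp: card_insert_if split: if_splits)

lemma half:
  fixes V :: "'v set" and E :: "'e set" and ends :: "'e \<Rightarrow> 'v set"
    and e1 e2 f1 f2 :: 'e
  assumes mg: "multigraph V E ends"
    and S: "is_k_edge_cut 2 V E ends {e1, e2}"
    and T: "is_k_edge_cut 3 V E ends {e1, f1, f2}"
  shows "\<not> is_edge_cut V E ends {e2, f1}"
proof -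
  have Sc: "is_edge_cut V E ends {e1, e2}" and Sm: "\<forall>D. D \<subset> {e1, e2} \<longrightarrow> \<not> is_edge_cut V E ends D"
    and S2: "card {e1, e2} = 2"
    using S by (auto simp: is_k_edge_cut_def)
  have Tc: "is_edge_cut V E ends {e1, f1, f2}" and Tm: "\<forall>D. D \<subset> {e1, f1, f2} \<longrightarrow> \<not> is_edge_cut V E ends D"
    and T3: "card {e1, f1, f2} = 3"
    using T by (auto simp: is_k_edge_cut_def)
  have SE: "{e1, e2} \<subseteq> E" using Sc by (simp add: is_edge_cut_def)
  have TE: "{e1, f1, f2} \<subseteq> E" using Tc by (simp add: is_edge_cut_def)
  have d12: "e1 \<noteq> e2" using S2 by auto
  have dT: "e1 \<noteq> f1" "e1 \<noteq> f2" "f1 \<noteq> f2" using card3_distinct[OF T3] by auto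
  have dE: "e2 \<noteq> f1" "e2 \<noteq> f2"
  proof -
    show "e2 \<noteq> f1"
    proof
      assume "e2 = f1"
      then have "{e1, e2} \<subset> {e1, f1, f2}" using dT by auto
      then show False using Tm Sc by blast
    qed
    show "e2 \<noteq> f2"
    proof
      assume "e2 = f2"
      then have "{e1, e2} \<subset> {e1, f1, f2}" using dT by auto
      then show False using Tm Sc by blast
    qed
  qed
  have ends_ex: "\<exists>x y. ends e = {x, y}" if "e \<in> E" for e
    using mg that unfolding multigraph_def by blast
  obtain a1 b1 where ea1: "ends e1 = {a1, b1}" using ends_ex SE by blast
  obtain a2 b2 where ea2: "ends e2 = {a2, b2}" using ends_ex SE by blast
  obtain c1 d1 where ef1: "ends f1 = {c1, d1}" using ends_ex TE by blast
  obtain c2 d2 where ef2: "ends f2 = {c2, d2}" using ends_ex TE by blast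
  define G0 where "G0 = E - {e1, e2, f1, f2}"
  have eqS: "E - {e1, e2} = insert f1 (insert f2 G0)" using TE dT dE d12 unfolding G0_def by blast
  have eqT: "E - {e1, f1, f2} = insert e2 G0" using SE dT dE d12 unfolding G0_def by blast
  have eq4: "E - {e1, f1} = insert f2 (insert e2 G0)" using SE TE dT dE d12 unfolding G0_def by blast
  have eqf1: "E - {f1} = insert e2 (insert e1 (insert f2 G0))" using SE TE dT dE d12 unfolding G0_def by blast
  have eqU: "E - {e2, f1} = insert e1 (insert f2 G0)" using SE TE dT dE d12 unfolding G0_def by blast
  have sub: "insert f2 G0 \<subseteq> E - {e1, e2}" using eqS by blast
  have nS2: "\<not> conn (E - {e1, e2}) ends a2 b2" using min_sep[OF mg Sc Sm _ ea2] by simp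
  have nS1: "\<not> conn (E - {e1, e2}) ends a1 b1" using min_sep[OF mg Sc Sm _ ea1] by simp
  have h1: "\<not> conn (insert f2 G0) ends a2 b2"
  proof
    assume "conn (insert f2 G0) ends a2 b2"
    then have "conn (E - {e1, e2}) ends a2 b2" by (rule conn_mono[rotated]) (rule sub)
    then show False using nS2 by simp
  qed
  have h2: "\<not> conn (insert f2 G0) ends a1 b1"
  proof
    assume "conn (insert f2 G0) ends a1 b1"
    then have "conn (E - {e1, e2}) ends a1 b1" by (rule conn_mono[rotated]) (rule sub)
    then show False using nS1 by simp
  qed
  have h3: "\<not> conn (insert e2 G0) ends a1 b1"
    using min_sep[OF mg Tc Tm _ ea1] eqT by simp
  have "{e1, f1} \<subset> {e1, f1, f2}" using dT by auto
  then have nc4: "\<not> is_edge_cut V E ends {e1, f1}" using Tm by blast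
  have h4: "conn (insert f2 (insert e2 G0)) ends a1 b1"
    using notcut_conn[OF mg nc4 _ _ ea1] TE eq4 by simp
  have A: "conn (insert e1 (insert f2 G0)) ends a2 b2"
    by (rule key[OF ea1 ea2 ef2 h1 h2 h3 h4])
  have "{f1} \<subset> {e1, f1, f2}" using dT by auto
  then have nc1: "\<not> is_edge_cut V E ends {f1}" using Tm by blast
  have "conn (E - {f1}) ends c1 d1"
    using notcut_conn[OF mg nc1 _ _ ef1] TE by simp
  then have "conn (insert e2 (insert e1 (insert f2 G0))) ends c1 d1" using eqf1 by simp
  then have B: "conn (insert e1 (insert f2 G0)) ends c1 d1"
    using conn_insert_same[where e=e2 and F="insert e1 (insert f2 G0)" and ends=ends and a=a2 and b=b2] ea2 A
    by blast
  have all: "conn (E - {e2, f1}) ends x y" if "e \<in> {e2, f1}" "ends e = {x, y}" for e x y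
  proof -
    have "e = e2 \<or> e = f1" using that(1) by blast
    then show ?thesis
    proof
      assume "e = e2"
      then show ?thesis using conn_ends_swap[where F="E - {e2, f1}" and x=a2 and y=b2 and x'=x and y'=y and e=e2 and ends=ends] ea2 that(2) A eqU by simp
    next
      assume "e = f1"
      then show ?thesis using conn_ends_swap[where F="E - {e2, f1}" and x=c1 and y=d1 and x'=x and y'=y and e=f1 and ends=ends] ef1 that(2) B eqU by simp
    qed
  qed
  have "\<not> ({e2, f1} \<subseteq> E \<and> (\<exists>e\<in>{e2, f1}. \<exists>x y. ends e = {x, y} \<and> \<not> conn (E - {e2, f1}) ends x y))"
    using all by blast
  then show ?thesis unfolding cut_iff[OF mg] .
qed


theorem lemma4:
  fixes V :: "'v set" and E :: "'e set" and ends :: "'e \<Rightarrow> 'v set"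
    and e1 e2 f1 f2 :: 'e
  assumes "multigraph V E ends"
    and "is_k_edge_cut 2 V E ends {e1, e2}"
    and "is_k_edge_cut 3 V E ends {e1, f1, f2}"
  shows "is_k_edge_cut 3 V E ends {e2, f1, f2}"
proof -
  note mg = assms(1) and S = assms(2) and T = assms(3)
  have Sc: "is_edge_cut V E ends {e1, e2}" and Sm: "\<forall>D. D \<subset> {e1, e2} \<longrightarrow> \<not> is_edge_cut V E ends D"
    and S2: "card {e1, e2} = 2"
    using S by (auto simp: is_k_edge_cut_def)
  have Tc: "is_edge_cut V E ends {e1, f1, f2}" and Tm: "\<forall>D. D \<subset> {e1, f1, f2} \<longrightarrow> \<not> is_edge_cut V E ends D"
    and T3: "card {e1, f1, f2} = 3"
    using T by (auto simp: is_k_edge_cut_def)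
  have SE: "{e1, e2} \<subseteq> E" using Sc by (simp add: is_edge_cut_def)
  have TE: "{e1, f1, f2} \<subseteq> E" using Tc by (simp add: is_edge_cut_def)
  have d12: "e1 \<noteq> e2" using S2 by auto
  have dT: "e1 \<noteq> f1" "e1 \<noteq> f2" "f1 \<noteq> f2" using card3_distinct[OF T3] by auto
  have dE: "e2 \<noteq> f1" "e2 \<noteq> f2"
  proof -
    show "e2 \<noteq> f1"
    proof
      assume "e2 = f1"
      then have "{e1, e2} \<subset> {e1, f1, f2}" using dT by auto
      then show False using Tm Sc by blast
    qed
    show "e2 \<noteq> f2"
    proof
      assume "e2 = f2"
      then have "{e1, e2} \<subset> {e1, f1, f2}" using dT by auto
      then show False using Tm Sc by blast
    qed
  qed
  have ends_ex: "\<exists>x y. ends e = {x, y}" if "e \<in> E" for e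
    using mg that unfolding multigraph_def by blast
  obtain a1 b1 where ea1: "ends e1 = {a1, b1}" using ends_ex SE by blast
  obtain a2 b2 where ea2: "ends e2 = {a2, b2}" using ends_ex SE by blast
  define G0 where "G0 = E - {e1, e2, f1, f2}"
  have eqT: "E - {e1, f1, f2} = insert e2 G0" using SE dT dE d12 unfolding G0_def by blast
  have eqU: "E - {e2, f1, f2} = insert e1 G0" using SE TE dT dE d12 unfolding G0_def by blast
  have sub: "G0 \<subseteq> E - {e1, e2}" unfolding G0_def by blast
  have nS2: "\<not> conn (E - {e1, e2}) ends a2 b2" using min_sep[OF mg Sc Sm _ ea2] by simp
  have g0: "\<not> conn G0 ends a2 b2"
  proof
    assume "conn G0 ends a2 b2"
    then have "conn (E - {e1, e2}) ends a2 b2" by (rule conn_mono[rotated]) (rule sub)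
    then show False using nS2 by simp
  qed
  have h3: "\<not> conn (insert e2 G0) ends a1 b1"
    using min_sep[OF mg Tc Tm _ ea1] eqT by simp
  have L: "conn (insert e2 G0) ends x y" if "conn G0 ends x y" for x y
    using that by (rule conn_mono[rotated]) auto
  have He2: "conn (insert e2 G0) ends a2 b2"
    using conn_edge[where e=e2 and F="insert e2 G0" and ends=ends] ea2 by blast
  have nU: "\<not> conn (insert e1 G0) ends a2 b2"
  proof
    assume "conn (insert e1 G0) ends a2 b2"
    then have "conn G0 ends a2 b2 \<or> (conn G0 ends a2 a1 \<and> conn G0 ends b1 b2) \<or> (conn G0 ends a2 b1 \<and> conn G0 ends a1 b2)"
      using conn_insert[where e=e1 and F=G0 and ends=ends and a=a1 and b=b1] ea1 by blast
    then show False
    proof (elim disjE conjE)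
      assume "conn G0 ends a2 b2" then show False using g0 by simp
    next
      assume g1: "conn G0 ends a2 a1" and g2: "conn G0 ends b1 b2"
      have "conn (insert e2 G0) ends a1 b1"
        by (rule conn_trans[OF conn_trans[OF L[OF conn_sym[OF g1]] He2] L[OF conn_sym[OF g2]]])
      then show False using h3 by simp
    next
      assume g1: "conn G0 ends a2 b1" and g2: "conn G0 ends a1 b2"
      have "conn (insert e2 G0) ends a1 b1"
        by (rule conn_trans[OF conn_trans[OF L[OF g2] conn_sym[OF He2]] L[OF g1]])
      then show False using h3 by simp
    qed
  qed
  have UE: "{e2, f1, f2} \<subseteq> E" using SE TE by blast
  have Uc: "is_edge_cut V E ends {e2, f1, f2}"
  proof -
    have "{e2, f1, f2} \<subseteq> E \<and> (\<exists>e\<in>{e2, f1, f2}. \<exists>x y. ends e = {x, y} \<and> \<not> conn (E - {e2, f1, f2}) ends x y)"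
      using UE ea2 nU eqU by auto
    then show ?thesis unfolding cut_iff[OF mg] .
  qed
  have U3: "card {e2, f1, f2} = 3" using dT dE by simp
  have n1: "\<not> is_edge_cut V E ends {e2, f1}" by (rule half[OF mg S T])
  have T': "is_k_edge_cut 3 V E ends {e1, f2, f1}" using T by (simp add: insert_commute)
  have n2: "\<not> is_edge_cut V E ends {e2, f2}" by (rule half[OF mg S T'])
  have "{f1, f2} \<subset> {e1, f1, f2}" using dT by auto
  then have n3: "\<not> is_edge_cut V E ends {f1, f2}" using Tm by blast
  have min: "\<not> is_edge_cut V E ends D" if "D \<subset> {e2, f1, f2}" for D
  proof -
    have "D \<subseteq> {f1, f2} \<or> D \<subseteq> {e2, f2} \<or> D \<subseteq> {e2, f1}" using that by blast
    then show ?thesis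
    proof (elim disjE)
      assume "D \<subseteq> {f1, f2}" then show ?thesis using cut_mono[OF mg _ _ ] n3 TE by blast
    next
      assume "D \<subseteq> {e2, f2}" then show ?thesis using cut_mono[OF mg _ _ ] n2 UE by blast
    next
      assume "D \<subseteq> {e2, f1}" then show ?thesis using cut_mono[OF mg _ _ ] n1 UE by blast
    qed
  qed
  show ?thesis unfolding is_k_edge_cut_def using Uc U3 min by blast
qed

end
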